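(* Let $\mathcal{K}^{\langle\infty\rangle}$ be an unbounded simple nested fractal. Then $$\inf\big\{\mathrm{dist}(\Delta_0^{(1)},\Delta_0^{(2)}):\ \Delta_0^{(1)},\Delta_0^{(2)}\in\mathcal{T}_0,\ \Delta_0^{(1)}\cap\Delta_0^{(2)}=\emptyset\big\}>0.$$
   Context: Setting: $L>1$, $N\ge2$, $\nu_1=0,\dots,\nu_N\in\mathbb{R}^2$, $\Psi_i(x)=x/L+\nu_i$, and $\mathcal{K}^{\langle 0\rangle}=\bigcup_i\Psi_i(\mathcal{K}^{\langle 0\rangle})$ is a planar simple nested fractal (with $V_0^{\langle0\rangle}$ its set of essential fixed points, $k=\#V_0^{\langle0\rangle}\ge3$). $\mathcal{K}^{\langle M\rangle}=L^M\mathcal{K}^{\langle 0\rangle}$ for $M\in\mathbb{Z}$, $\mathcal{K}^{\langle\infty\rangle}=\bigcup_{M\ge0}\mathcal{K}^{\langle M\rangle}$. An $M$-complex is $\Delta_M=\mathcal{K}^{\langle M\rangle}+\sum_{j=M+1}^{J}L^j\nu_{i_j}$ for some $J\ge M+1$ and $i_j\in\{1,\dots,N\}$; $\mathcal{T}_M$ is the set of all $M$-complexes. For closed bounded $E,F$, $\mathrm{dist}(E,F)=\inf\{|x-y|:x\in E,y\in F\}$ (Euclidean). *)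

theory Defs
  imports "HOL-Analysis.Analysis"
begin

definition Psi :: "real \<Rightarrow> (nat \<Rightarrow> real^2) \<Rightarrow> nat \<Rightarrow> real^2 \<Rightarrow> real^2" where
  "Psi L nu i x = (1 / L) *\<^sub>R x + nu i"

definition Psi_word :: "real \<Rightarrow> (nat \<Rightarrow> real^2) \<Rightarrow> nat list \<Rightarrow> real^2 \<Rightarrow> real^2" where
  "Psi_word L nu w = foldr (\<lambda>i f. Psi L nu i \<circ> f) w id"

definition words :: "nat \<Rightarrow> nat \<Rightarrow> nat list set" where
  "words N n = {w. length w = n \<and> set w \<subseteq> {1..N}}"

definition fixpts :: "real \<Rightarrow> (nat \<Rightarrow> real^2) \<Rightarrow> nat \<Rightarrow> (real^2) set" where
  "fixpts L nu N = {x. \<exists>i\<in>{1..N}. Psi L nu i x = x}"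

definition V0 :: "real \<Rightarrow> (nat \<Rightarrow> real^2) \<Rightarrow> nat \<Rightarrow> (real^2) set" where
  "V0 L nu N = {x \<in> fixpts L nu N. \<exists>y \<in> fixpts L nu N. \<exists>i\<in>{1..N}. \<exists>j\<in>{1..N}.
                   i \<noteq> j \<and> Psi L nu i x = Psi L nu j y}"

definition Vn :: "real \<Rightarrow> (nat \<Rightarrow> real^2) \<Rightarrow> nat \<Rightarrow> nat \<Rightarrow> (real^2) set" where
  "Vn L nu N n = (\<Union>w\<in>words N n. Psi_word L nu w ` V0 L nu N)"

text \<open>Reflection in the perpendicular bisector of the segment [x,y] (x \<noteq> y).\<close>
definition refl_bisector :: "real^2 \<Rightarrow> real^2 \<Rightarrow> real^2 \<Rightarrow> real^2" where
  "refl_bisector x y z =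
     z - (2 * (((z - (1/2) *\<^sub>R (x + y)) \<bullet> (x - y)) / (norm (x - y))\<^sup>2)) *\<^sub>R (x - y)"

definition simple_nested_fractal ::
  "real \<Rightarrow> nat \<Rightarrow> (nat \<Rightarrow> real^2) \<Rightarrow> (real^2) set \<Rightarrow> bool" where
  "simple_nested_fractal L N nu K \<longleftrightarrow>
     L > 1 \<and> N \<ge> 2 \<and> nu 1 = 0 \<and>
     compact K \<and> K \<noteq> {} \<and> K = (\<Union>i\<in>{1..N}. Psi L nu i ` K) \<and>
     \<comment> \<open>at least two essential fixed points (here the planar setting requires k \<ge> 3)\<close>
     card (V0 L nu N) \<ge> 2 \<and>
     \<comment> \<open>open set condition\<close>
     (\<exists>U. open U \<and> bounded U \<and> U \<noteq> {} \<and>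
        (\<forall>i\<in>{1..N}. Psi L nu i ` U \<subseteq> U) \<and>
        (\<forall>i\<in>{1..N}. \<forall>j\<in>{1..N}. i \<noteq> j \<longrightarrow> Psi L nu i ` U \<inter> Psi L nu j ` U = {})) \<and>
     \<comment> \<open>connectivity: the graph of 1-cells with nonempty intersections is connected\<close>
     (\<forall>i\<in>{1..N}. \<forall>j\<in>{1..N}.
        (\<lambda>a b. a \<in> {1..N} \<and> b \<in> {1..N} \<and> Psi L nu a ` K \<inter> Psi L nu b ` K \<noteq> {})\<^sup>*\<^sup>* i j) \<and>
     \<comment> \<open>symmetry\<close>
     (\<forall>x\<in>V0 L nu N. \<forall>y\<in>V0 L nu N. x \<noteq> y \<longrightarrow>
        (\<forall>n. refl_bisector x y ` Vn L nu N n \<subseteq> Vn L nu N n)) \<and>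
     \<comment> \<open>nesting\<close>
     (\<forall>n. \<forall>w\<in>words N n. \<forall>w'\<in>words N n. w \<noteq> w' \<longrightarrow>
        Psi_word L nu w ` K \<inter> Psi_word L nu w' ` K =
        Psi_word L nu w ` V0 L nu N \<inter> Psi_word L nu w' ` V0 L nu N)"

definition complexes0 :: "real \<Rightarrow> nat \<Rightarrow> (nat \<Rightarrow> real^2) \<Rightarrow> (real^2) set \<Rightarrow> (real^2) set set" where
  "complexes0 L N nu K =
     {(\<lambda>x. x + (\<Sum>j\<in>{1..J}. (L ^ j) *\<^sub>R nu (i j))) ` K | J i.
        J \<ge> 1 \<and> (\<forall>j\<in>{1..J}. i j \<in> {1..N})}"

end

theory Submission
  imports Defs
begin

definition tr :: "real \<Rightarrow> (nat \<Rightarrow> real^2) \<Rightarrow> nat \<Rightarrow> (nat \<Rightarrow> nat) \<Rightarrow> real^2" where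
  "tr L nu J i = (\<Sum>j\<in>{1..J}. (L ^ j) *\<^sub>R nu (i j))"

definition valid :: "nat \<Rightarrow> nat \<Rightarrow> (nat \<Rightarrow> nat) \<Rightarrow> bool" where
  "valid N J i \<longleftrightarrow> (\<forall>j\<in>{1..J}. i j \<in> {1..N})"

fun wd :: "nat \<Rightarrow> (nat \<Rightarrow> nat) \<Rightarrow> nat list" where
  "wd 0 i = []"
| "wd (Suc J) i = i (Suc J) # wd J i"

lemma tr_0 [simp]: "tr L nu 0 i = 0"
  by (simp add: tr_def)

lemma tr_Suc: "tr L nu (Suc J) i = tr L nu J i + (L ^ Suc J) *\<^sub>R nu (i (Suc J))"
  by (simp add: tr_def sum.cl_ivl_Suc)

lemma tr_shift: "tr L nu (Suc J) i = L *\<^sub>R (nu (i 1) + tr L nu J (i \<circ> Suc))"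
proof (induction J)
  case 0
  then show ?case by (simp add: tr_def)
next
  case (Suc J)
  show ?case
    apply (subst tr_Suc)
    apply (subst Suc)
    apply (simp add: tr_Suc algebra_simps)
    done
qed

lemma wd_length: "length (wd J i) = J"
  by (induction J) auto

lemma wd_set: "set (wd J i) = i ` {1..J}"
  by (induction J) (auto simp: atLeastAtMostSuc_conv)

lemma Psi_word_Cons: "Psi_word L nu (a # w) = Psi L nu a \<circ> Psi_word L nu w"
  by (simp add: Psi_word_def)

lemma Psi_word_wd:
  assumes "L > 0"
  shows "(L ^ J) *\<^sub>R Psi_word L nu (wd J i) x = x + tr L nu J i"
proof (induction J)
  case 0
  then show ?case by (simp add: Psi_word_def)
next
  case (Suc J)
  have "(L ^ Suc J) *\<^sub>R Psi_word L nu (wd (Suc J) i) x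
     = (L ^ Suc J) *\<^sub>R ((1 / L) *\<^sub>R Psi_word L nu (wd J i) x + nu (i (Suc J)))"
    by (simp add: Psi_word_Cons Psi_def)
  also have "\<dots> = (L ^ J) *\<^sub>R Psi_word L nu (wd J i) x + (L ^ Suc J) *\<^sub>R nu (i (Suc J))"
    using assms by (simp add: scaleR_add_right)
  also have "\<dots> = x + tr L nu (Suc J) i"
    using Suc by (simp add: tr_Suc)
  finally show ?case .
qed

lemma Psi_word_wd':
  assumes "L > 0"
  shows "Psi_word L nu (wd J i) x = (1 / L ^ J) *\<^sub>R (x + tr L nu J i)"
proof -
  have "(1 / L ^ J) *\<^sub>R ((L ^ J) *\<^sub>R Psi_word L nu (wd J i) x) = Psi_word L nu (wd J i) x"
    using assms by simp
  then show ?thesis using Psi_word_wd[OF assms] by simp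
qed

lemma nest_lemma:
  assumes L: "L > 0"
    and nest: "\<forall>n. \<forall>w\<in>words N n. \<forall>w'\<in>words N n. w \<noteq> w' \<longrightarrow>
        Psi_word L nu w ` K \<inter> Psi_word L nu w' ` K =
        Psi_word L nu w ` V \<inter> Psi_word L nu w' ` V"
    and Vne: "V \<noteq> {}"
    and vi: "valid N J i" and vi': "valid N J i'"
    and x: "x \<in> (\<lambda>y. y + tr L nu J i) ` K" "x \<in> (\<lambda>y. y + tr L nu J i') ` K"
  shows "\<exists>v\<in>V. \<exists>v'\<in>V. tr L nu J i' - tr L nu J i = v - v'"
proof (cases "tr L nu J i = tr L nu J i'")
  case True
  then show ?thesis using Vne by auto
next
  case False
  then have ne: "wd J i \<noteq> wd J i'"
    using Psi_word_wd[OF L, of J nu i 0] Psi_word_wd[OF L, of J nu i' 0] by auto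
  have w: "wd J i \<in> words N J" "wd J i' \<in> words N J"
    using vi vi' by (auto simp: words_def wd_length wd_set valid_def)
  obtain p p' where p: "p \<in> K" "x = p + tr L nu J i" "p' \<in> K" "x = p' + tr L nu J i'"
    using x by auto
  have "(1 / L ^ J) *\<^sub>R x \<in> Psi_word L nu (wd J i) ` K \<inter> Psi_word L nu (wd J i') ` K"
    using p Psi_word_wd'[OF L] by (metis IntI image_eqI)
  then have "(1 / L ^ J) *\<^sub>R x \<in> Psi_word L nu (wd J i) ` V \<inter> Psi_word L nu (wd J i') ` V"
    using nest w ne by blast
  then have a: "(1 / L ^ J) *\<^sub>R x \<in> Psi_word L nu (wd J i) ` V"
    and b: "(1 / L ^ J) *\<^sub>R x \<in> Psi_word L nu (wd J i') ` V" by (rule IntD1, rule IntD2)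
  from a obtain v where v1: "v \<in> V" "Psi_word L nu (wd J i) v = (1 / L ^ J) *\<^sub>R x"
    by (metis imageE)
  from b obtain v' where v2: "v' \<in> V" "Psi_word L nu (wd J i') v' = (1 / L ^ J) *\<^sub>R x"
    by (metis imageE)
  note v = v1(1) v2(1) v1(2) v2(2)
  have "v + tr L nu J i = x" "v' + tr L nu J i' = x"
  proof -
    have LJ: "L ^ J \<noteq> 0" using L by simp
    show "v + tr L nu J i = x"
      using Psi_word_wd[OF L, of J nu i v] v(3) LJ L by simp
    show "v' + tr L nu J i' = x"
      using Psi_word_wd[OF L, of J nu i' v'] v(4) LJ L by simp
  qed
  then have "tr L nu J i' - tr L nu J i = v - v'" by (simp add: algebra_simps)
  then show ?thesis using v by blast
qed

lemma dist_scaleR_both: "dist (r *\<^sub>R (u::'a::real_normed_vector)) (r *\<^sub>R w) = \<bar>r\<bar> * dist u w"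
  by (simp add: dist_norm scaleR_diff_right[symmetric])

lemma main_ind:
  assumes L: "L > 1" and c: "c > 0"
    and Kfix: "\<And>a p. a \<in> {1..N} \<Longrightarrow> p \<in> K \<Longrightarrow> Psi L nu a p \<in> K"
    and nestl: "\<And>J i i' x. valid N J i \<Longrightarrow> valid N J i' \<Longrightarrow>
       x \<in> (\<lambda>y. y + tr L nu J i) ` K \<Longrightarrow> x \<in> (\<lambda>y. y + tr L nu J i') ` K \<Longrightarrow>
       \<exists>v\<in>V. \<exists>v'\<in>V. tr L nu J i' - tr L nu J i = v - v'"
    and base: "\<And>a b v v' p q. a \<in> {1..N} \<Longrightarrow> b \<in> {1..N} \<Longrightarrow> v \<in> V \<Longrightarrow> v' \<in> V \<Longrightarrow>
       K \<inter> (\<lambda>y. y + L *\<^sub>R (nu b - nu a + (v - v'))) ` K = {} \<Longrightarrow> p \<in> K \<Longrightarrow> q \<in> K \<Longrightarrow>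
       c \<le> dist p (q + L *\<^sub>R (nu b - nu a + (v - v')))"
  shows "valid N J i \<Longrightarrow> valid N J i' \<Longrightarrow>
    (\<lambda>y. y + tr L nu J i) ` K \<inter> (\<lambda>y. y + tr L nu J i') ` K = {} \<Longrightarrow>
    x \<in> (\<lambda>y. y + tr L nu J i) ` K \<Longrightarrow> y \<in> (\<lambda>y. y + tr L nu J i') ` K \<Longrightarrow> c \<le> dist x y"
proof (induction J arbitrary: i i' x y)
  case 0
  then show ?case by auto
next
  case (Suc J)
  define a where "a = i 1"
  define b where "b = i' 1"
  define s where "s = tr L nu J (i \<circ> Suc)"
  define s' where "s' = tr L nu J (i' \<circ> Suc)"
  have vs: "valid N J (i \<circ> Suc)" "valid N J (i' \<circ> Suc)"
    using Suc.prems(1,2) by (auto simp: valid_def)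
  have ab: "a \<in> {1..N}" "b \<in> {1..N}"
    using Suc.prems(1,2) by (auto simp: valid_def a_def b_def)
  have t: "tr L nu (Suc J) i = L *\<^sub>R (nu a + s)" "tr L nu (Suc J) i' = L *\<^sub>R (nu b + s')"
    using tr_shift a_def b_def s_def s'_def by auto
  obtain p q where pq: "p \<in> K" "x = p + L *\<^sub>R (nu a + s)" "q \<in> K" "y = q + L *\<^sub>R (nu b + s')"
    using Suc.prems(4,5) t by auto
  have L0: "L \<noteq> 0" using L by simp
  show ?case
  proof (cases "(\<lambda>y. y + s) ` K \<inter> (\<lambda>y. y + s') ` K = {}")
    case True
    have x: "x = L *\<^sub>R (Psi L nu a p + s)" using pq L0 by (simp add: Psi_def algebra_simps)
    have y: "y = L *\<^sub>R (Psi L nu b q + s')" using pq L0 by (simp add: Psi_def algebra_simps)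
    have "c \<le> dist (Psi L nu a p + s) (Psi L nu b q + s')"
    proof (rule Suc.IH[OF vs])
      show "(\<lambda>y. y + tr L nu J (i \<circ> Suc)) ` K \<inter> (\<lambda>y. y + tr L nu J (i' \<circ> Suc)) ` K = {}"
        using True by (simp add: s_def s'_def)
      show "Psi L nu a p + s \<in> (\<lambda>y. y + tr L nu J (i \<circ> Suc)) ` K"
        unfolding s_def using Kfix[OF ab(1) pq(1)] by (rule imageI)
      show "Psi L nu b q + s' \<in> (\<lambda>y. y + tr L nu J (i' \<circ> Suc)) ` K"
        unfolding s'_def using Kfix[OF ab(2) pq(3)] by (rule imageI)
    qed
    also have "\<dots> \<le> L * dist (Psi L nu a p + s) (Psi L nu b q + s')"
      using L by (simp add: mult_le_cancel_right1)
    also have "\<dots> = dist x y" using x y L by (simp add: dist_scaleR_both)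
    finally show ?thesis .
  next
    case False
    then obtain z where z: "z \<in> (\<lambda>y. y + s) ` K" "z \<in> (\<lambda>y. y + s') ` K" by blast
    obtain v v' where v: "v \<in> V" "v' \<in> V" "s' - s = v - v'"
      using nestl[OF vs z[unfolded s_def s'_def]] s_def s'_def by blast
    define d where "d = L *\<^sub>R (nu b - nu a + (v - v'))"
    have d: "tr L nu (Suc J) i' = d + tr L nu (Suc J) i"
    proof -
      have e0: "s' + v' = s + v" using v(3) by (simp add: algebra_simps)
      have e1: "L *\<^sub>R s' + L *\<^sub>R v' = L *\<^sub>R s + L *\<^sub>R v"
        using arg_cong[OF e0, of "scaleR L"] by (simp add: scaleR_right_distrib)
      show ?thesis using t e1 by (simp add: d_def algebra_simps)
    qed
    have disj: "K \<inter> (\<lambda>y. y + d) ` K = {}"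
    proof (rule ccontr)
      assume "K \<inter> (\<lambda>y. y + d) ` K \<noteq> {}"
      then obtain w1 w2 where w: "w1 \<in> K" "w2 \<in> K" "w1 = w2 + d" by blast
      have "w1 + tr L nu (Suc J) i \<in> (\<lambda>y. y + tr L nu (Suc J) i) ` K" using w by blast
      moreover have "w1 + tr L nu (Suc J) i \<in> (\<lambda>y. y + tr L nu (Suc J) i') ` K"
        using w d by (auto simp: algebra_simps)
      ultimately show False using Suc.prems(3) by blast
    qed
    have "c \<le> dist p (q + d)" using base[OF ab v(1,2) _ pq(1,3)] disj d_def by blast
    also have "\<dots> = dist x y"
    proof -
      have "x = p + tr L nu (Suc J) i" using pq t by simp
      moreover have "y = (q + d) + tr L nu (Suc J) i" using pq t d by (simp add: add.assoc)
      ultimately show ?thesis by (simp only: dist_add_cancel2)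
    qed
    finally show ?thesis .
  qed
qed

lemma pad_lemma:
  assumes "J1 \<le> J" and "valid N J1 i" and "1 \<le> N" and "nu 1 = 0"
  shows "valid N J (\<lambda>j. if j \<le> J1 then i j else 1) \<and>
         tr L nu J (\<lambda>j. if j \<le> J1 then i j else 1) = tr L nu J1 i"
proof
  show "valid N J (\<lambda>j. if j \<le> J1 then i j else 1)"
    using assms by (auto simp: valid_def)
  show "tr L nu J (\<lambda>j. if j \<le> J1 then i j else 1) = tr L nu J1 i"
    using assms(1)
  proof (induction J rule: dec_induct)
    case base
    then show ?case unfolding tr_def by (rule sum.cong) auto
  next
    case (step n)
    then show ?case using assms(4) by (simp add: tr_Suc)
  qed
qed

theorem lemmaA1:
  fixes L :: real and N :: nat and nu :: "nat \<Rightarrow> real^2" and K :: "(real^2) set"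
  assumes "simple_nested_fractal L N nu K"
    and "card (V0 L nu N) \<ge> 3"
  shows "Inf {setdist A B | A B. A \<in> complexes0 L N nu K \<and> B \<in> complexes0 L N nu K
                                  \<and> A \<inter> B = {}} > 0"
proof -
  define V where "V = V0 L nu N"
  have L: "L > 1" and N: "N \<ge> 2" and nu1: "nu 1 = 0" and cK: "compact K" and Kne: "K \<noteq> {}"
    and Keq: "K = (\<Union>i\<in>{1..N}. Psi L nu i ` K)"
    and osc: "\<exists>U. open U \<and> bounded U \<and> U \<noteq> {} \<and>
        (\<forall>i\<in>{1..N}. Psi L nu i ` U \<subseteq> U) \<and>
        (\<forall>i\<in>{1..N}. \<forall>j\<in>{1..N}. i \<noteq> j \<longrightarrow> Psi L nu i ` U \<inter> Psi L nu j ` U = {})"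
    and nest: "\<forall>n. \<forall>w\<in>words N n. \<forall>w'\<in>words N n. w \<noteq> w' \<longrightarrow>
        Psi_word L nu w ` K \<inter> Psi_word L nu w' ` K =
        Psi_word L nu w ` V \<inter> Psi_word L nu w' ` V"
    using assms(1) unfolding simple_nested_fractal_def V_def apply - by ((elim conjE, assumption))+
  have finV: "finite V" and Vne: "V \<noteq> {}"
    using assms(2) unfolding V_def by (auto intro: card_ge_0_finite)
  define D where "D = (\<lambda>(a,b,v,v'). L *\<^sub>R (nu b - nu a + (v - v'))) ` ({1..N} \<times> {1..N} \<times> V \<times> V)"
  have finD: "finite D" unfolding D_def using finV by auto
  define C where "C = insert 1 ((\<lambda>d. setdist K ((\<lambda>y. y + d) ` K)) ` {d\<in>D. K \<inter> (\<lambda>y. y + d) ` K = {}})"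
  define c where "c = Min C"
  have finC: "finite C" unfolding C_def using finD by auto
  have tre: "(\<lambda>y. y + d) ` K = (+) d ` K" for d :: "real^2" by (auto simp: add.commute)
  have cpos: "c > 0"
    unfolding c_def
  proof (subst Min_gr_iff[OF finC])
    show "C \<noteq> {}" unfolding C_def by simp
    show "\<forall>x\<in>C. 0 < x"
      unfolding C_def
      using Kne cK
      by (auto simp: tre setdist_gt_0_compact_closed closed_translation compact_imp_closed)
  qed
  have cle: "c \<le> setdist K ((\<lambda>y. y + d) ` K)" if "d \<in> D" "K \<inter> (\<lambda>y. y + d) ` K = {}" for d
    unfolding c_def using finC that by (intro Min_le) (auto simp: C_def)
  have Lpos: "L > 0" using L by simp
  have main: "c \<le> dist x y"
    if "valid N J i" "valid N J i'"
      "(\<lambda>y. y + tr L nu J i) ` K \<inter> (\<lambda>y. y + tr L nu J i') ` K = {}"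
      "x \<in> (\<lambda>y. y + tr L nu J i) ` K" "y \<in> (\<lambda>y. y + tr L nu J i') ` K" for J i i' x y
  proof (rule main_ind[OF L cpos _ _ _ that, where V = V])
    show "Psi L nu a p \<in> K" if "a \<in> {1..N}" "p \<in> K" for a p
      using that Keq by blast
    show "\<exists>v\<in>V. \<exists>v'\<in>V. tr L nu J i' - tr L nu J i = v - v'"
      if "valid N J i" "valid N J i'" "x \<in> (\<lambda>y. y + tr L nu J i) ` K"
         "x \<in> (\<lambda>y. y + tr L nu J i') ` K" for J i i' x
      using nest_lemma[OF Lpos nest Vne that] .
    show "c \<le> dist p (q + L *\<^sub>R (nu b - nu a + (v - v')))"
      if "a \<in> {1..N}" "b \<in> {1..N}" "v \<in> V" "v' \<in> V"
        "K \<inter> (\<lambda>y. y + L *\<^sub>R (nu b - nu a + (v - v'))) ` K = {}" "p \<in> K" "q \<in> K" for a b v v' p q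
    proof -
      have "L *\<^sub>R (nu b - nu a + (v - v')) \<in> D" unfolding D_def using that(1-4)
        by (rule_tac x="(a,b,v,v')" in image_eqI) auto
      then have "c \<le> setdist K ((\<lambda>y. y + L *\<^sub>R (nu b - nu a + (v - v'))) ` K)"
        using cle that(5) by blast
      also have "\<dots> \<le> dist p (q + L *\<^sub>R (nu b - nu a + (v - v')))"
        using that(6,7) by (intro setdist_le_dist) auto
      finally show ?thesis .
    qed
  qed
  define S where "S = {setdist A B | A B. A \<in> complexes0 L N nu K \<and> B \<in> complexes0 L N nu K
                                  \<and> A \<inter> B = {}}"
  have lower: "c \<le> z" if zS: "z \<in> S" for z
  proof -
    obtain A B where AB: "z = setdist A B" "A \<in> complexes0 L N nu K" "B \<in> complexes0 L N nu K"
      "A \<inter> B = {}" using zS unfolding S_def by blast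
    obtain J1 i1 where A: "A = (\<lambda>y. y + tr L nu J1 i1) ` K" "valid N J1 i1"
      using AB(2) unfolding complexes0_def tr_def valid_def by blast
    obtain J2 i2 where B: "B = (\<lambda>y. y + tr L nu J2 i2) ` K" "valid N J2 i2"
      using AB(3) unfolding complexes0_def tr_def valid_def by blast
    define J where "J = max J1 J2"
    have N1: "1 \<le> N" using N by simp
    obtain j1 where j1: "valid N J j1" "tr L nu J j1 = tr L nu J1 i1"
      using pad_lemma[of J1 J N i1 nu L, OF _ A(2) N1 nu1] unfolding J_def by auto
    obtain j2 where j2: "valid N J j2" "tr L nu J j2 = tr L nu J2 i2"
      using pad_lemma[of J2 J N i2 nu L, OF _ B(2) N1 nu1] unfolding J_def by auto
    have "c \<le> setdist A B"
    proof (rule le_setdistI)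
      show "A \<noteq> {}" "B \<noteq> {}" using A B Kne by auto
      show "c \<le> dist x y" if "x \<in> A" "y \<in> B" for x y
        using main[OF j1(1) j2(1)] AB(4) A B j1 j2 that by simp
    qed
    then show ?thesis using AB(1) by simp
  qed
  have Sne: "S \<noteq> {}"
  proof -
    obtain U where U: "U \<noteq> {}" "\<forall>i\<in>{1..N}. \<forall>j\<in>{1..N}. i \<noteq> j \<longrightarrow> Psi L nu i ` U \<inter> Psi L nu j ` U = {}"
      using osc by blast
    have nu2: "nu 2 \<noteq> 0"
    proof
      assume "nu 2 = 0"
      then have "Psi L nu 1 = Psi L nu 2" using nu1 by (auto simp: Psi_def fun_eq_iff)
      moreover have "Psi L nu 1 ` U \<inter> Psi L nu 2 ` U = {}" using U(2) N by auto
      ultimately show False using U(1) by auto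
    qed
    obtain R where R: "R > 0" "\<forall>x\<in>K. norm x \<le> R"
      using compact_imp_bounded[OF cK] bounded_pos by blast
    obtain n where n: "2 * R / norm (nu 2) < L ^ n" using real_arch_pow[OF L] by blast
    define J where "J = Suc n"
    have "L ^ n \<le> L ^ J" unfolding J_def using L by simp
    with n have "2 * R / norm (nu 2) < L ^ J" by simp
    then have big: "2 * R < L ^ J * norm (nu 2)" using nu2 by (simp add: field_simps)
    define i where "i = (\<lambda>j::nat. if j = J then 2 else (1::nat))"
    have sumB: "(\<Sum>j\<in>{1..J}. (L ^ j) *\<^sub>R nu (i j)) = (L ^ J) *\<^sub>R nu 2"
    proof -
      have "(\<Sum>j\<in>{1..J}. (L ^ j) *\<^sub>R nu (i j)) = (\<Sum>j\<in>{1..J}. if j = J then (L ^ J) *\<^sub>R nu 2 else 0)"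
        using nu1 by (intro sum.cong) (auto simp: i_def)
      also have "\<dots> = (L ^ J) *\<^sub>R nu 2" by (simp add: J_def)
      finally show ?thesis .
    qed
    define B where "B = (\<lambda>x. x + (\<Sum>j\<in>{1..J}. (L ^ j) *\<^sub>R nu (i j))) ` K"
    have Bc: "B \<in> complexes0 L N nu K"
      unfolding complexes0_def B_def using N by (auto simp: J_def i_def intro!: exI[of _ J] exI[of _ i])
    have Ac: "(\<lambda>x. x + (\<Sum>j\<in>{1..1}. (L ^ j) *\<^sub>R nu ((\<lambda>_. 1::nat) j))) ` K \<in> complexes0 L N nu K"
      unfolding complexes0_def using N
      by (intro CollectI exI[of _ 1] exI[of _ "\<lambda>_. 1::nat"]) auto
    have AK: "(\<lambda>x. x + (\<Sum>j\<in>{1..1}. (L ^ j) *\<^sub>R nu ((\<lambda>_. 1::nat) j))) ` K = K"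
      using nu1 by simp
    have disj: "K \<inter> B = {}"
    proof (rule ccontr)
      assume "K \<inter> B \<noteq> {}"
      then obtain z w where zw: "z \<in> K" "w \<in> K" "z = w + (L ^ J) *\<^sub>R nu 2"
        unfolding B_def sumB by blast
      have "norm ((L ^ J) *\<^sub>R nu 2) = norm (z - w)" using zw by simp
      also have "\<dots> \<le> norm z + norm w" by (rule norm_triangle_ineq4)
      also have "\<dots> \<le> 2 * R" using R(2) zw(1,2) by (smt (verit))
      finally have "L ^ J * norm (nu 2) \<le> 2 * R" using L by simp
      with big show False by simp
    qed
    have "setdist K B \<in> S" unfolding S_def using Ac AK Bc disj by force
    then show ?thesis by blast
  qed
  have "c \<le> Inf S" using Sne lower by (rule cInf_greatest)
  with cpos show ?thesis unfolding S_def by simp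
qed

end
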